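(* Let $X$ be a graph (multiple edges and loops allowed) which is connected, has countable vertex set, has bounded degree, and has no vertex of degree one. Fix $x_0\in VX$. For $x\in VX$ and $k\ge 0$ let $c_k(x)$ be the number of geodesic loops of length $k$ starting at $x$, let $(\Delta_X c_k)(x)=\deg(x)c_k(x)-\sum_{e\in E_x}c_k(t(e))$, and let $N_m(x_0)$ be the number of closed geodesic paths of length $m$ starting at $x_0$. Then for every integer $m>2$, $$N_m(x_0)=c_m(x_0)-(\deg(x_0)-2)\sum_{i=1}^{\lceil m/2\rceil-1}c_{m-2i}(x_0)+\sum_{i=1}^{\lceil m/2\rceil-1}i\,(\Delta_X c_{m-2i})(x_0),$$ where $\lceil\cdot\rceil$ is the ceiling function.
   Context: A graph $X=(VX,EX)$ consists of disjoint sets $VX$, $EX$ with maps $e\mapsto (o(e),t(e))\in VX\times VX$ and $e\mapsto\bar e$ such that $\bar e\ne e$, $\bar{\bar e}=e$, $o(e)=t(\bar e)$. For $x\in VX$, $E_x=\{e\in EX: o(e)=x\}$ and $\deg(x)=|E_x|$; bounded degree means $\sup_x\deg(x)<\infty$. A path of length $n$ is a sequence of edges $c=(e_1,\dots,e_n)$ with $t(e_i)=o(e_{i+1})$; $o(c)=o(e_1)$, $t(c)=t(e_n)$; it is closed if $o(c)=t(c)$; a vertex is regarded as a path of length $0$. It has a back-tracking if $e_{i+1}=\bar e_i$ for some $i$, and has a tail if $e_n=\bar e_1$. A geodesic loop is a closed path without back-tracking; a closed geodesic path is a geodesic loop without tail. "Starting at $x$" means $o(c)=x$. *)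

theory Defs
  imports Complex_Main "HOL-Library.Countable_Set"
begin

text \<open>A graph in the sense of Serre: vertex set V, edge set E (of a separate type, so
  disjointness is automatic), origin map org, terminus map ter, reversal bar.\<close>

definition is_graph :: "'v set \<Rightarrow> 'e set \<Rightarrow> ('e \<Rightarrow> 'v) \<Rightarrow> ('e \<Rightarrow> 'v) \<Rightarrow> ('e \<Rightarrow> 'e) \<Rightarrow> bool" where
  "is_graph V E org ter bar \<longleftrightarrow>
     (\<forall>e\<in>E. org e \<in> V \<and> ter e \<in> V \<and> bar e \<in> E \<and> bar e \<noteq> e \<and> bar (bar e) = e
              \<and> org e = ter (bar e))"

definition out_edges :: "'e set \<Rightarrow> ('e \<Rightarrow> 'v) \<Rightarrow> 'v \<Rightarrow> 'e set" where
  "out_edges E org x = {e \<in> E. org e = x}"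

definition gdeg :: "'e set \<Rightarrow> ('e \<Rightarrow> 'v) \<Rightarrow> 'v \<Rightarrow> nat" where
  "gdeg E org x = card (out_edges E org x)"

definition bounded_degree :: "'v set \<Rightarrow> 'e set \<Rightarrow> ('e \<Rightarrow> 'v) \<Rightarrow> bool" where
  "bounded_degree V E org \<longleftrightarrow>
     (\<exists>B::nat. \<forall>x\<in>V. finite (out_edges E org x) \<and> card (out_edges E org x) \<le> B)"

definition is_path :: "'e set \<Rightarrow> ('e \<Rightarrow> 'v) \<Rightarrow> ('e \<Rightarrow> 'v) \<Rightarrow> 'e list \<Rightarrow> bool" where
  "is_path E org ter c \<longleftrightarrow>
     set c \<subseteq> E \<and> (\<forall>i. Suc i < length c \<longrightarrow> ter (c ! i) = org (c ! Suc i))"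

definition no_backtracking :: "('e \<Rightarrow> 'e) \<Rightarrow> 'e list \<Rightarrow> bool" where
  "no_backtracking bar c \<longleftrightarrow> (\<forall>i. Suc i < length c \<longrightarrow> c ! Suc i \<noteq> bar (c ! i))"

definition has_tail :: "('e \<Rightarrow> 'e) \<Rightarrow> 'e list \<Rightarrow> bool" where
  "has_tail bar c \<longleftrightarrow> c \<noteq> [] \<and> last c = bar (hd c)"

definition connected_graph :: "'v set \<Rightarrow> 'e set \<Rightarrow> ('e \<Rightarrow> 'v) \<Rightarrow> ('e \<Rightarrow> 'v) \<Rightarrow> bool" where
  "connected_graph V E org ter \<longleftrightarrow>
     (\<forall>x\<in>V. \<forall>y\<in>V. x = y \<or>
        (\<exists>c. c \<noteq> [] \<and> is_path E org ter c \<and> org (hd c) = x \<and> ter (last c) = y))"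

definition geod_loops :: "'e set \<Rightarrow> ('e \<Rightarrow> 'v) \<Rightarrow> ('e \<Rightarrow> 'v) \<Rightarrow> ('e \<Rightarrow> 'e) \<Rightarrow> nat \<Rightarrow> 'v \<Rightarrow> 'e list set" where
  "geod_loops E org ter bar k x =
     {c. length c = k \<and> c \<noteq> [] \<and> is_path E org ter c \<and> org (hd c) = x \<and> ter (last c) = x
         \<and> no_backtracking bar c}"

text \<open>c_k(x): number of geodesic loops of length k at x; for k = 0 the only one is the
  vertex x itself, regarded as a path of length 0.\<close>
definition ck :: "'e set \<Rightarrow> ('e \<Rightarrow> 'v) \<Rightarrow> ('e \<Rightarrow> 'v) \<Rightarrow> ('e \<Rightarrow> 'e) \<Rightarrow> nat \<Rightarrow> 'v \<Rightarrow> nat" where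
  "ck E org ter bar k x = (if k = 0 then 1 else card (geod_loops E org ter bar k x))"

definition laplace_ck :: "'e set \<Rightarrow> ('e \<Rightarrow> 'v) \<Rightarrow> ('e \<Rightarrow> 'v) \<Rightarrow> ('e \<Rightarrow> 'e) \<Rightarrow> nat \<Rightarrow> 'v \<Rightarrow> int" where
  "laplace_ck E org ter bar k x =
     int (gdeg E org x) * int (ck E org ter bar k x)
     - (\<Sum>e\<in>out_edges E org x. int (ck E org ter bar k (ter e)))"

definition Nm :: "'e set \<Rightarrow> ('e \<Rightarrow> 'v) \<Rightarrow> ('e \<Rightarrow> 'v) \<Rightarrow> ('e \<Rightarrow> 'e) \<Rightarrow> nat \<Rightarrow> 'v \<Rightarrow> nat" where
  "Nm E org ter bar m x = card {c \<in> geod_loops E org ter bar m x. \<not> has_tail bar c}"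

end

theory Submission
  imports Defs
begin


lemma succ_conj: "successively (\<lambda>a b. P a b \<and> Q a b) xs \<longleftrightarrow> successively P xs \<and> successively Q xs"
  by (induction xs rule: induct_list012) auto

locale G =
  fixes V :: "'v set" and E :: "'e set" and org ter :: "'e \<Rightarrow> 'v" and bar :: "'e \<Rightarrow> 'e"
  assumes gr: "is_graph V E org ter bar"
    and fin_out: "\<And>x. x \<in> V \<Longrightarrow> finite (out_edges E org x)"
begin

definition R :: "'e \<Rightarrow> 'e \<Rightarrow> bool" where
  "R a b \<longleftrightarrow> ter a = org b \<and> b \<noteq> bar a"

definition lp :: "nat \<Rightarrow> 'v \<Rightarrow> 'e list \<Rightarrow> bool" where
  "lp k x c \<longleftrightarrow> length c = k \<and> c \<noteq> [] \<and> set c \<subseteq> E \<and> successively R c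
     \<and> org (hd c) = x \<and> ter (last c) = x"

abbreviation out where "out x \<equiv> out_edges E org x"

lemma bar_E[simp]: "e \<in> E \<Longrightarrow> bar e \<in> E"
  and bar_ne[simp]: "e \<in> E \<Longrightarrow> bar e \<noteq> e"
  and bar_bar[simp]: "e \<in> E \<Longrightarrow> bar (bar e) = e"
  and org_bar[simp]: "e \<in> E \<Longrightarrow> org (bar e) = ter e"
  and ter_bar[simp]: "e \<in> E \<Longrightarrow> ter (bar e) = org e"
  and org_V: "e \<in> E \<Longrightarrow> org e \<in> V"
  and ter_V: "e \<in> E \<Longrightarrow> ter e \<in> V"
  using gr unfolding is_graph_def by (metis)+

lemma bar_inj: "a \<in> E \<Longrightarrow> b \<in> E \<Longrightarrow> bar a = bar b \<longleftrightarrow> a = b"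
  by (metis bar_bar)

lemma bar_swap: "a \<in> E \<Longrightarrow> b \<in> E \<Longrightarrow> a = bar b \<longleftrightarrow> b = bar a"
  by (metis bar_bar)

lemma fin_out_all: "finite (out x)"
proof (cases "x \<in> V")
  case True then show ?thesis by (rule fin_out)
next
  case False
  then have "out x = {}" unfolding out_edges_def using org_V by auto
  then show ?thesis by simp
qed

lemma loops_eq: "geod_loops E org ter bar k x = {c. lp k x c}"
  unfolding geod_loops_def lp_def is_path_def no_backtracking_def R_def succ_conj
    successively_conv_nth by auto

definition Q :: "nat \<Rightarrow> 'v \<Rightarrow> 'e list set" where
  "Q k x = {c. length c = k \<and> set c \<subseteq> E \<and> successively (\<lambda>a b. ter a = org b) c
      \<and> (c \<noteq> [] \<longrightarrow> org (hd c) = x)}"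

lemma fin_Q: "finite (Q k x)"
proof (induction k arbitrary: x)
  case 0
  have "Q 0 x \<subseteq> {[]}" unfolding Q_def by auto
  then show ?case using finite_subset by blast
next
  case (Suc k)
  have "Q (Suc k) x \<subseteq> (\<lambda>(e,c). e # c) ` (SIGMA e:out x. Q k (ter e))"
  proof
    fix d assume d: "d \<in> Q (Suc k) x"
    then obtain e c where dc: "d = e # c" unfolding Q_def by (cases d) auto
    then show "d \<in> (\<lambda>(e,c). e # c) ` (SIGMA e:out x. Q k (ter e))"
      using d unfolding Q_def out_edges_def by (force simp: successively_Cons)
  qed
  moreover have "finite (SIGMA e:out x. Q k (ter e))"
    using Suc fin_out_all by blast
  ultimately show ?case using finite_subset by blast
qed

lemma fin_lp: "finite {c. lp k x c}"
proof -
  have "{c. lp k x c} \<subseteq> Q k x" unfolding lp_def Q_def R_def succ_conj by auto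
  then show ?thesis using fin_Q finite_subset by blast
qed

end

context G begin

definition SS where "SS k x = (SIGMA e:out x. {c. lp k (ter e) c})"

lemma out_iff: "e \<in> out x \<longleftrightarrow> e \<in> E \<and> org e = x"
  unfolding out_edges_def by auto

lemma lp_setE: "lp k x c \<Longrightarrow> a \<in> set c \<Longrightarrow> a \<in> E"
  unfolding lp_def by auto

lemma partA:
  assumes k: "k \<ge> 1"
  shows "card {p\<in>SS k x. hd (snd p) \<noteq> bar (fst p) \<and> last (snd p) \<noteq> fst p}
         = card {c. lp (k+2) x c \<and> has_tail bar c}"
proof -
  let ?A = "{p\<in>SS k x. hd (snd p) \<noteq> bar (fst p) \<and> last (snd p) \<noteq> fst p}"
  let ?f = "\<lambda>(e,c). e # c @ [bar e]"
  have inj: "inj_on ?f ?A" by (auto simp: inj_on_def)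
  have "?f ` ?A = {c. lp (k+2) x c \<and> has_tail bar c}"
  proof (intro equalityI subsetI)
    fix d assume "d \<in> ?f ` ?A"
    then obtain e c where d: "d = e # c @ [bar e]" and ec: "(e,c) \<in> ?A" by auto
    then have e: "e \<in> E" "org e = x" and c: "lp k (ter e) c" "hd c \<noteq> bar e" "last c \<noteq> e"
      by (auto simp: SS_def out_iff)
    have cE: "set c \<subseteq> E" "c \<noteq> []" "last c \<in> E" using c(1) unfolding lp_def by auto
    have "bar e \<noteq> bar (last c)" using bar_inj[OF e(1) cE(3)] c(3) by auto
    then show "d \<in> {c. lp (k+2) x c \<and> has_tail bar c}"
      using c e cE unfolding d lp_def has_tail_def
      by (auto simp: successively_append_iff successively_Cons R_def)
  next
    fix d assume "d \<in> {c. lp (k+2) x c \<and> has_tail bar c}"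
    then have d: "lp (k+2) x d" "last d = bar (hd d)" unfolding has_tail_def by auto
    obtain e r where er: "d = e # r" using d unfolding lp_def by (cases d) auto
    have "r \<noteq> []" using d(1) er k unfolding lp_def by auto
    then obtain c l where cl: "r = c @ [l]" by (metis rev_exhaust)
    have cne: "c \<noteq> []" using d(1) er cl k unfolding lp_def by auto
    have l: "l = bar e" using d(2) er cl by simp
    have dd: "d = e # c @ [bar e]" using er cl l by simp
    have eE: "e \<in> E" using d(1) dd unfolding lp_def by auto
    have cE: "set c \<subseteq> E" using d(1) dd unfolding lp_def by auto
    have lc: "last c \<in> E" using cE cne by auto
    have "(e,c) \<in> ?A"
      using d(1) eE cE cne lc k unfolding dd lp_def SS_def
      by (auto simp: successively_append_iff successively_Cons R_def bar_inj out_iff)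
    then show "d \<in> ?f ` ?A" unfolding dd by force
  qed
  then show ?thesis using card_image[OF inj] by simp
qed

lemma partB1:
  assumes k: "k \<ge> 1"
  shows "card {p\<in>SS k x. hd (snd p) = bar (fst p) \<and> last (snd p) \<noteq> fst p}
         = card {c. lp k x c \<and> \<not> has_tail bar c}"
proof -
  let ?A = "{p\<in>SS k x. hd (snd p) = bar (fst p) \<and> last (snd p) \<noteq> fst p}"
  let ?f = "\<lambda>(e,c). tl c @ [hd c]"
  have inj: "inj_on ?f ?A"
  proof (rule inj_onI)
    fix p p' assume a0: "p \<in> ?A" "p' \<in> ?A" "?f p = ?f p'"
    obtain e c e' c' where pp: "p = (e,c)" "p' = (e',c')" by (cases p, cases p')
    have a: "(e,c) \<in> ?A" "(e',c') \<in> ?A" "tl c @ [hd c] = tl c' @ [hd c']" using a0 pp by auto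
    have "c \<noteq> []" "c' \<noteq> []" "e \<in> E" "e' \<in> E" using a(1,2) by (auto simp: SS_def out_iff lp_def)
    then have "c = c'" using a(3) by (metis list.collapse butlast_snoc last_snoc)
    then show "p = p'" using a(1,2) \<open>e\<in>E\<close> \<open>e'\<in>E\<close> bar_inj pp by auto
  qed
  have "?f ` ?A = {c. lp k x c \<and> \<not> has_tail bar c}"
  proof (intro equalityI subsetI)
    fix d assume "d \<in> ?f ` ?A"
    then obtain e c where d: "d = tl c @ [hd c]" and ec: "(e,c) \<in> ?A" by auto
    then have e: "e \<in> E" "org e = x" and c: "lp k (ter e) c" "hd c = bar e" "last c \<noteq> e"
      by (auto simp: SS_def out_iff)
    obtain q where cq: "c = bar e # q" using c unfolding lp_def by (cases c) auto
    have qE: "set q \<subseteq> E" using c(1) cq unfolding lp_def by auto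
    show "d \<in> {c. lp k x c \<and> \<not> has_tail bar c}"
    proof (cases "q = []")
      case True
      then show ?thesis using c e cq unfolding d lp_def has_tail_def by auto
    next
      case False
      have lq: "last q \<in> E" "hd q \<in> E" using qE False by auto
      have "bar e \<noteq> bar (last q)" using bar_inj[OF e(1) lq(1)] c(3) cq False by auto
      moreover have "bar e \<noteq> bar (hd q)" using c(1) cq False lq e bar_inj[OF e(1) lq(2)]
        by (auto simp: lp_def R_def successively_Cons)
      ultimately show ?thesis using c e cq False qE lq unfolding d lp_def has_tail_def
        by (auto simp: successively_append_iff successively_Cons R_def)
    qed
  next
    fix d assume "d \<in> {c. lp k x c \<and> \<not> has_tail bar c}"
    then have d: "lp k x d" "last d \<noteq> bar (hd d)" unfolding has_tail_def by (auto simp: lp_def)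
    have dne: "d \<noteq> []" using d unfolding lp_def by auto
    then obtain r l where rl: "d = r @ [l]" by (metis rev_exhaust)
    have lE: "l \<in> E" and rE: "set r \<subseteq> E" using d(1) rl unfolding lp_def by auto
    let ?e = "bar l" and ?c = "l # r"
    have "(?e, ?c) \<in> ?A"
    proof (cases "r = []")
      case True
      then show ?thesis using d lE rl unfolding SS_def lp_def by (auto simp: out_iff)
    next
      case False
      have h: "hd r \<in> E" "last r \<in> E" using rE False by auto
      have "hd r \<noteq> bar l" using d(2) rl False h lE bar_swap by auto
      moreover have "last r \<noteq> bar l" using d(1) rl False h lE bar_swap
        by (auto simp: lp_def R_def successively_append_iff)
      ultimately show ?thesis using d lE rl False rE h unfolding SS_def lp_def
        by (auto simp: out_iff successively_append_iff successively_Cons R_def)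
    qed
    moreover have "?f (?e, ?c) = d" using rl by (cases r) auto
    ultimately show "d \<in> ?f ` ?A" by force
  qed
  then show ?thesis using card_image[OF inj] by simp
qed

lemma partC:
  assumes k: "k \<ge> 1"
  shows "card {p\<in>SS k x. hd (snd p) \<noteq> bar (fst p) \<and> last (snd p) = fst p}
         = card {c. lp k x c \<and> \<not> has_tail bar c}"
proof -
  let ?A = "{p\<in>SS k x. hd (snd p) \<noteq> bar (fst p) \<and> last (snd p) = fst p}"
  let ?f = "\<lambda>(e,c). e # butlast c"
  have inj: "inj_on ?f ?A"
  proof (rule inj_onI)
    fix p p' assume a0: "p \<in> ?A" "p' \<in> ?A" "?f p = ?f p'"
    obtain e c e' c' where pp: "p = (e,c)" "p' = (e',c')" by (cases p, cases p')
    have a: "(e,c) \<in> ?A" "(e',c') \<in> ?A" "e # butlast c = e' # butlast c'" using a0 pp by auto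
    have "c \<noteq> []" "c' \<noteq> []" using a(1,2) by (auto simp: SS_def out_iff lp_def)
    moreover have "last c = e" "last c' = e'" using a(1,2) by auto
    ultimately show "p = p'" using a(3) pp by (metis list.inject append_butlast_last_id)
  qed
  have "?f ` ?A = {c. lp k x c \<and> \<not> has_tail bar c}"
  proof (intro equalityI subsetI)
    fix d assume "d \<in> ?f ` ?A"
    then obtain e c where d: "d = e # butlast c" and ec: "(e,c) \<in> ?A" by auto
    then have e: "e \<in> E" "org e = x" and c: "lp k (ter e) c" "hd c \<noteq> bar e" "last c = e"
      by (auto simp: SS_def out_iff)
    have "c \<noteq> []" using c unfolding lp_def by auto
    then obtain p where cp: "c = p @ [e]" using c(3) by (metis append_butlast_last_id)
    have pE: "set p \<subseteq> E" using c(1) cp unfolding lp_def by auto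
    have dd: "d = e # p" using d cp by simp
    show "d \<in> {c. lp k x c \<and> \<not> has_tail bar c}"
    proof (cases "p = []")
      case True
      then show ?thesis using c e cp unfolding dd lp_def has_tail_def by auto
    next
      case False
      have lp': "last p \<in> E" "hd p \<in> E" using pE False by auto
      have "e \<noteq> bar (last p)" using c(1) cp False
        by (auto simp: lp_def R_def successively_append_iff)
      then have "last p \<noteq> bar e" using bar_swap lp' e by auto
      then show ?thesis using c e cp False pE lp' unfolding dd lp_def has_tail_def
        by (auto simp: successively_append_iff successively_Cons R_def)
    qed
  next
    fix d assume "d \<in> {c. lp k x c \<and> \<not> has_tail bar c}"
    then have d: "lp k x d" "last d \<noteq> bar (hd d)" unfolding has_tail_def by (auto simp: lp_def)
    have dne: "d \<noteq> []" using d unfolding lp_def by auto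
    then obtain e r where er: "d = e # r" by (cases d) auto
    have eE: "e \<in> E" and rE: "set r \<subseteq> E" using d(1) er unfolding lp_def by auto
    let ?c = "r @ [e]"
    have "(e, ?c) \<in> ?A"
    proof (cases "r = []")
      case True
      then show ?thesis using d eE er unfolding SS_def lp_def by (auto simp: out_iff)
    next
      case False
      have h: "hd r \<in> E" "last r \<in> E" using rE False by auto
      have "e \<noteq> bar (last r)" using d(2) er False h eE bar_swap by auto
      moreover have "hd r \<noteq> bar e" using d(1) er False h eE
        by (auto simp: lp_def R_def successively_Cons)
      ultimately show ?thesis using d eE er False rE h unfolding SS_def lp_def
        by (auto simp: out_iff successively_append_iff successively_Cons R_def)
    qed
    moreover have "?f (e, ?c) = d" using er by simp
    ultimately show "d \<in> ?f ` ?A" by force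
  qed
  then show ?thesis using card_image[OF inj] by simp
qed

end


lemma card_split: "finite S \<Longrightarrow> card S = card {p\<in>S. P p} + card {p\<in>S. \<not> P p}"
  by (subst card_Un_disjoint[symmetric]) (auto intro: arg_cong[where f=card])

context G begin

lemma partB2_small:
  assumes "k \<le> 2"
  shows "{p\<in>SS k x. hd (snd p) = bar (fst p) \<and> last (snd p) = fst p} = {}"
proof -
  { fix e c assume a: "(e,c) \<in> SS k x" "hd c = bar e" "last c = e"
    then have e: "e \<in> E" and c: "lp k (ter e) c" by (auto simp: SS_def out_iff)
    have False
    proof (cases c)
      case Nil then show ?thesis using c by (auto simp: lp_def)
    next
      case (Cons h r)
      show ?thesis
      proof (cases r)
        case Nil then show ?thesis using a Cons e by auto
      next
        case (Cons h2 r2)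
        then have "r2 = []" using c \<open>c = h # r\<close> assms by (auto simp: lp_def)
        then show ?thesis using a c Cons \<open>c = h # r\<close> e by (auto simp: lp_def R_def)
      qed
    qed }
  then show ?thesis by auto
qed

lemma tail_small:
  assumes "k \<le> 2"
  shows "{c. lp k x c \<and> has_tail bar c} = {}"
proof -
  { fix c assume c: "lp k x c" "has_tail bar c"
    have False
    proof (cases c)
      case Nil then show ?thesis using c by (auto simp: lp_def)
    next
      case (Cons h r)
      have hE: "h \<in> E" using c Cons by (auto simp: lp_def)
      show ?thesis
      proof (cases r)
        case Nil then show ?thesis using c Cons hE bar_ne[OF hE] by (auto simp: has_tail_def)
      next
        case (Cons h2 r2)
        then have "r2 = []" using c \<open>c = h # r\<close> assms by (auto simp: lp_def)
        then show ?thesis using c Cons \<open>c = h # r\<close> by (auto simp: lp_def R_def has_tail_def)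
      qed
    qed }
  then show ?thesis by auto
qed

lemma partB2:
  assumes j: "j \<ge> 1"
  shows "card {p\<in>SS (j+2) x. hd (snd p) = bar (fst p) \<and> last (snd p) = fst p}
         = card (SIGMA c:{c. lp j x c}. {e\<in>out x. e \<noteq> hd c \<and> e \<noteq> bar (last c)})"
proof -
  let ?A = "{p\<in>SS (j+2) x. hd (snd p) = bar (fst p) \<and> last (snd p) = fst p}"
  let ?B = "SIGMA c:{c. lp j x c}. {e\<in>out x. e \<noteq> hd c \<and> e \<noteq> bar (last c)}"
  let ?f = "\<lambda>(c,e). (e, bar e # c @ [e])"
  have inj: "inj_on ?f ?B" by (auto simp: inj_on_def)
  have "?f ` ?B = ?A"
  proof (intro equalityI subsetI)
    fix p assume "p \<in> ?f ` ?B"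
    then obtain c e where p: "p = (e, bar e # c @ [e])" and ce: "(c,e) \<in> ?B" by auto
    then have e: "e \<in> E" "org e = x" "e \<noteq> hd c" "e \<noteq> bar (last c)" and c: "lp j x c"
      by (auto simp: out_iff)
    have cE: "set c \<subseteq> E" "c \<noteq> []" "hd c \<in> E" "last c \<in> E" using c by (auto simp: lp_def)
    have "hd c \<noteq> bar (bar e)" using e by simp
    then show "p \<in> ?A" using c e cE unfolding p SS_def lp_def
      by (auto simp: out_iff successively_append_iff successively_Cons R_def)
  next
    fix p assume "p \<in> ?A"
    then obtain e d where p: "p = (e,d)" and ed: "(e,d) \<in> ?A" by (cases p) auto
    then have e: "e \<in> E" "org e = x" and d: "lp (j+2) (ter e) d" "hd d = bar e" "last d = e"
      by (auto simp: SS_def out_iff)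
    obtain h r where hr: "d = h # r" using d by (cases d) (auto simp: lp_def)
    have "r \<noteq> []" using d hr j by (auto simp: lp_def)
    then obtain c l where cl: "r = c @ [l]" by (metis rev_exhaust)
    have dd: "d = bar e # c @ [e]" using hr cl d by auto
    have cne: "c \<noteq> []" using d dd j by (auto simp: lp_def)
    have cE: "set c \<subseteq> E" "hd c \<in> E" "last c \<in> E" using d dd cne by (auto simp: lp_def)
    have "(c,e) \<in> ?B"
      using d e cE cne unfolding dd lp_def
      by (auto simp: out_iff successively_append_iff successively_Cons R_def bar_swap)
    then show "p \<in> ?f ` ?B" unfolding p dd by force
  qed
  then show ?thesis using card_image[OF inj] by simp
qed

lemma card_two_out:
  assumes "lp j x c"
  shows "card {e\<in>out x. e \<noteq> hd c \<and> e \<noteq> bar (last c)} + 2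
         = card (out x) + (if has_tail bar c then 1 else 0)"
proof -
  have h0: "hd c \<in> E" "last c \<in> E" using assms by (auto simp: lp_def)
  have h: "hd c \<in> out x" "bar (last c) \<in> out x" "hd c \<in> E" "last c \<in> E"
    using assms h0 by (auto simp: lp_def out_iff)
  have eq: "{e\<in>out x. e \<noteq> hd c \<and> e \<noteq> bar (last c)} = out x - {hd c, bar (last c)}" by auto
  have sub: "{hd c, bar (last c)} \<subseteq> out x" using h by auto
  have c1: "card (out x - {hd c, bar (last c)}) = card (out x) - card {hd c, bar (last c)}"
    using card_Diff_subset[OF _ sub] fin_out_all finite_subset[OF sub] by auto
  have le: "card {hd c, bar (last c)} \<le> card (out x)" using card_mono[OF fin_out_all sub] .
  have ht: "has_tail bar c \<longleftrightarrow> hd c = bar (last c)"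
    using assms h by (auto simp: lp_def has_tail_def bar_swap)
  show ?thesis
  proof (cases "has_tail bar c")
    case True
    then have "card {hd c, bar (last c)} = 1" using ht by auto
    then show ?thesis using eq c1 le True by auto
  next
    case False
    then have "card {hd c, bar (last c)} = 2" using ht by auto
    then show ?thesis using eq c1 le False by auto
  qed
qed

definition Tc where "Tc k x = card {c. lp k x c \<and> has_tail bar c}"
definition Nc where "Nc k x = card {c. lp k x c \<and> \<not> has_tail bar c}"

lemma ck_split: "card {c. lp k x c} = Tc k x + Nc k x"
  unfolding Tc_def Nc_def using card_split[OF fin_lp, of k x "has_tail bar"] by simp

lemma B2_count:
  assumes j: "j \<ge> 1"
  shows "int (card {p\<in>SS (j+2) x. hd (snd p) = bar (fst p) \<and> last (snd p) = fst p})
         = (int (card (out x)) - 2) * int (card {c. lp j x c}) + int (Tc j x)"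
proof -
  let ?L = "{c. lp j x c}"
  have "card {p\<in>SS (j+2) x. hd (snd p) = bar (fst p) \<and> last (snd p) = fst p}
      = (\<Sum>c\<in>?L. card {e\<in>out x. e \<noteq> hd c \<and> e \<noteq> bar (last c)})"
    unfolding partB2[OF j] by (rule card_SigmaI) (auto simp: fin_lp fin_out_all)
  moreover have "\<And>c. c \<in> ?L \<Longrightarrow> int (card {e\<in>out x. e \<noteq> hd c \<and> e \<noteq> bar (last c)})
      = int (card (out x)) - 2 + (if has_tail bar c then 1 else 0)"
  proof -
    fix c assume "c \<in> ?L"
    then have "card {e\<in>out x. e \<noteq> hd c \<and> e \<noteq> bar (last c)} + 2
         = card (out x) + (if has_tail bar c then 1 else 0)" using card_two_out by auto
    then show "int (card {e\<in>out x. e \<noteq> hd c \<and> e \<noteq> bar (last c)})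
      = int (card (out x)) - 2 + (if has_tail bar c then 1 else 0)" by (cases "has_tail bar c") auto
  qed
  ultimately have "int (card {p\<in>SS (j+2) x. hd (snd p) = bar (fst p) \<and> last (snd p) = fst p})
      = (\<Sum>c\<in>?L. int (card (out x)) - 2 + (if has_tail bar c then 1 else 0))"
    by (simp add: of_nat_sum)
  also have "\<dots> = (\<Sum>c\<in>?L. int (card (out x)) - 2) + (\<Sum>c\<in>?L. (if has_tail bar c then 1 else 0))"
    by (simp add: sum.distrib)
  also have "(\<Sum>c\<in>?L. (if has_tail bar c then 1 else 0)) = int (card {c\<in>?L. has_tail bar c})"
    using fin_lp by (simp add: sum.If_cases Collect_conj_eq)
  finally show ?thesis unfolding Tc_def by (simp add: mult.commute)
qed

end


definition US :: "(nat \<Rightarrow> int) \<Rightarrow> nat \<Rightarrow> int" where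
  "US a m = (\<Sum>i\<in>{1..(m-1) div 2}. a (m - 2*i))"
definition VS :: "(nat \<Rightarrow> int) \<Rightarrow> nat \<Rightarrow> int" where
  "VS a m = (\<Sum>i\<in>{1..(m-1) div 2}. int i * a (m - 2*i))"

lemma US_small: "m \<le> 2 \<Longrightarrow> US a m = 0" unfolding US_def by auto
lemma VS_small: "m \<le> 2 \<Longrightarrow> VS a m = 0" unfolding VS_def by auto

lemma US_step: assumes "m \<ge> 1" shows "US a (m+2) = a m + US a m"
proof -
  let ?n = "(m-1) div 2"
  have n: "(m+2-1) div 2 = Suc ?n" using assms by auto
  have "US a (m+2) = (\<Sum>i\<in>{1..Suc ?n}. a (m + 2 - 2*i))" unfolding US_def n ..
  also have "\<dots> = a m + (\<Sum>i\<in>{Suc 1..Suc ?n}. a (m + 2 - 2*i))"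
    by (subst sum.atLeast_Suc_atMost) auto
  also have "(\<Sum>i\<in>{Suc 1..Suc ?n}. a (m + 2 - 2*i)) = (\<Sum>i\<in>{1..?n}. a (m + 2 - 2*Suc i))"
    by (rule sum.shift_bounds_cl_Suc_ivl)
  also have "\<dots> = US a m" unfolding US_def by simp
  finally show ?thesis .
qed

lemma VS_step: assumes "m \<ge> 1" shows "VS a (m+2) = a m + VS a m + US a m"
proof -
  let ?n = "(m-1) div 2"
  have n: "(m+2-1) div 2 = Suc ?n" using assms by auto
  have "VS a (m+2) = (\<Sum>i\<in>{1..Suc ?n}. int i * a (m + 2 - 2*i))" unfolding VS_def n ..
  also have "\<dots> = a m + (\<Sum>i\<in>{Suc 1..Suc ?n}. int i * a (m + 2 - 2*i))"
    by (subst sum.atLeast_Suc_atMost) auto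
  also have "(\<Sum>i\<in>{Suc 1..Suc ?n}. int i * a (m + 2 - 2*i)) = (\<Sum>i\<in>{1..?n}. int (Suc i) * a (m + 2 - 2*Suc i))"
    by (rule sum.shift_bounds_cl_Suc_ivl)
  also have "\<dots> = (\<Sum>i\<in>{1..?n}. int i * a (m - 2*i) + a (m - 2 * i))"
    by (simp add: algebra_simps)
  also have "\<dots> = VS a m + US a m" unfolding VS_def US_def by (simp add: sum.distrib)
  finally show ?thesis by simp
qed

lemma rec_solution:
  fixes T c s :: "nat \<Rightarrow> int" and d :: int
  assumes T12: "T 1 = 0" "T 2 = 0"
    and rec: "\<And>k. k \<ge> 1 \<Longrightarrow> s k = T (k+2) + 2 * (c k - T k) +
          (if k \<le> 2 then 0 else (d - 2) * c (k-2) + T (k-2))"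
    and m: "m \<ge> 1"
  shows "T m = (d - 2) * US c m - VS (\<lambda>j. d * c j - s j) m"
  using m
proof (induction m rule: less_induct)
  case (less m)
  let ?D = "\<lambda>j. d * c j - s j"
  let ?F = "\<lambda>m. (d - 2) * US c m - VS ?D m"
  show ?case
  proof (cases "m \<le> 2")
    case True
    then have "m = 1 \<or> m = 2" using less by auto
    then show ?thesis using T12 True US_small VS_small by auto
  next
    case False
    define k where "k = m - 2"
    have k: "m = k + 2" "k \<ge> 1" using False unfolding k_def by auto
    have IHk: "T k = ?F k" using less k by auto
    have Tm: "T m = s k - 2 * (c k - T k) - (if k \<le> 2 then 0 else (d - 2) * c (k-2) + T (k-2))"
      using rec[OF k(2)] k by simp
    have Fm: "?F m = (d-2) * (c k + US c k) - (?D k + VS ?D k + US ?D k)"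
      using k US_step[OF k(2)] VS_step[OF k(2)] by simp
    show ?thesis
    proof (cases "k \<le> 2")
      case True
      then show ?thesis using Tm Fm IHk US_small[OF True] VS_small[OF True] by (simp add: algebra_simps)
    next
      case False
      define k' where "k' = k - 2"
      have k': "k = k' + 2" "k' \<ge> 1" using False unfolding k'_def by auto
      have IHk': "T k' = ?F k'" using less k k' by auto
      show ?thesis using Tm Fm IHk IHk' False k' US_step[OF k'(2), of c] VS_step[OF k'(2), of ?D]
          US_step[OF k'(2), of ?D]
        by (simp add: algebra_simps)
    qed
  qed
qed



context G begin

lemma finite_SS: "finite (SS k x)"
  unfolding SS_def using fin_out_all fin_lp by blast

lemma key:
  assumes k: "k \<ge> 1"
  shows "int (\<Sum>e\<in>out x. card {c. lp k (ter e) c}) = int (Tc (k+2) x) + 2 * int (Nc k x) +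
     (if k \<le> 2 then 0 else (int (card (out x)) - 2) * int (card {c. lp (k-2) x c}) + int (Tc (k-2) x))"
proof -
  let ?P = "\<lambda>p. hd (snd p) = bar (fst p)" and ?Q = "\<lambda>p. last (snd p) = fst p"
  have s: "(\<Sum>e\<in>out x. card {c. lp k (ter e) c}) = card (SS k x)"
    unfolding SS_def by (rule card_SigmaI[symmetric]) (auto simp: fin_out_all fin_lp)
  have f1: "finite {p\<in>SS k x. ?P p}" "finite {p\<in>SS k x. \<not> ?P p}" using finite_SS by auto
  have "card (SS k x) = card {p\<in>SS k x. ?P p} + card {p\<in>SS k x. \<not> ?P p}"
    by (rule card_split[OF finite_SS])
  also have "card {p\<in>SS k x. ?P p} = card {p\<in>{p\<in>SS k x. ?P p}. ?Q p} + card {p\<in>{p\<in>SS k x. ?P p}. \<not> ?Q p}"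
    by (rule card_split[OF f1(1)])
  also have "card {p\<in>SS k x. \<not> ?P p} = card {p\<in>{p\<in>SS k x. \<not> ?P p}. ?Q p} + card {p\<in>{p\<in>SS k x. \<not> ?P p}. \<not> ?Q p}"
    by (rule card_split[OF f1(2)])
  finally have "card (SS k x) = card {p\<in>SS k x. ?P p \<and> ?Q p} + card {p\<in>SS k x. ?P p \<and> \<not> ?Q p}
       + (card {p\<in>SS k x. \<not> ?P p \<and> ?Q p} + card {p\<in>SS k x. \<not> ?P p \<and> \<not> ?Q p})"
    by (simp add: conj_assoc)
  also have "card {p\<in>SS k x. ?P p \<and> \<not> ?Q p} = Nc k x" using partB1[OF k] unfolding Nc_def by simp
  also have "card {p\<in>SS k x. \<not> ?P p \<and> ?Q p} = Nc k x" using partC[OF k] unfolding Nc_def by simp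
  also have "card {p\<in>SS k x. \<not> ?P p \<and> \<not> ?Q p} = Tc (k+2) x" using partA[OF k] unfolding Tc_def by simp
  finally have main: "card (SS k x) = card {p\<in>SS k x. ?P p \<and> ?Q p} + 2 * Nc k x + Tc (k+2) x" by simp
  show ?thesis
  proof (cases "k \<le> 2")
    case True
    then show ?thesis using main s partB2_small[OF True, of x] by simp
  next
    case False
    then have kk: "k = (k-2) + 2" "k - 2 \<ge> 1" by auto
    have "int (card {p\<in>SS k x. ?P p \<and> ?Q p}) = (int (card (out x)) - 2) * int (card {c. lp (k-2) x c}) + int (Tc (k-2) x)"
      using B2_count[OF kk(2), of x] kk(1) by simp
    then show ?thesis using main s False by simp
  qed
qed

end

lemma ceil_eq: "nat \<lceil>real m / 2\<rceil> - 1 = (m - 1) div 2" for m :: nat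
  by linarith

theorem proposition3p2:
  fixes V :: "'v set" and E :: "'e set" and org ter :: "'e \<Rightarrow> 'v" and bar :: "'e \<Rightarrow> 'e"
    and x0 :: 'v and m :: nat
  assumes "is_graph V E org ter bar"
    and "connected_graph V E org ter"
    and "countable V"
    and "bounded_degree V E org"
    and "\<forall>x\<in>V. gdeg E org x \<noteq> 1"
    and "x0 \<in> V"
    and "m > 2"
  shows "int (Nm E org ter bar m x0) =
           int (ck E org ter bar m x0)
           - (int (gdeg E org x0) - 2) *
               (\<Sum>i\<in>{1..nat \<lceil>real m / 2\<rceil> - 1}. int (ck E org ter bar (m - 2 * i) x0))
           + (\<Sum>i\<in>{1..nat \<lceil>real m / 2\<rceil> - 1}. int i * laplace_ck E org ter bar (m - 2 * i) x0)"
proof -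
  interpret G V E org ter bar
  proof
    show "is_graph V E org ter bar" by fact
    fix x assume "x \<in> V" then show "finite (out_edges E org x)"
      using assms(4) unfolding bounded_degree_def by blast
  qed
  have ckc: "\<And>j x. j \<ge> 1 \<Longrightarrow> ck E org ter bar j x = card {c. lp j x c}"
    unfolding ck_def loops_eq by auto
  let ?d = "int (card (out x0))"
  let ?T = "\<lambda>j. int (Tc j x0)"
  let ?c = "\<lambda>j. int (ck E org ter bar j x0)"
  let ?s = "\<lambda>j. \<Sum>e\<in>out x0. int (ck E org ter bar j (ter e))"
  have e1: "{c. lp 1 x0 c \<and> has_tail bar c} = {}" by (rule tail_small) simp
  have e2: "{c. lp 2 x0 c \<and> has_tail bar c} = {}" by (rule tail_small) simp
  have T12: "?T 1 = 0" "?T 2 = 0" unfolding Tc_def e1 e2 by simp_all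
  have rec: "?s k = ?T (k+2) + 2 * (?c k - ?T k) +
          (if k \<le> 2 then 0 else (?d - 2) * ?c (k-2) + ?T (k-2))" if k: "k \<ge> 1" for k
  proof -
    have "?s k = int (\<Sum>e\<in>out x0. card {c. lp k (ter e) c})"
      using ckc[OF k] by (simp add: of_nat_sum)
    also have "\<dots> = int (Tc (k+2) x0) + 2 * int (Nc k x0) +
     (if k \<le> 2 then 0 else (?d - 2) * int (card {c. lp (k-2) x0 c}) + int (Tc (k-2) x0))"
      by (rule key[OF k])
    also have "int (Nc k x0) = ?c k - ?T k" using ck_split ckc[OF k] by simp
    also have "(if k \<le> 2 then 0 else (?d - 2) * int (card {c. lp (k-2) x0 c}) + int (Tc (k-2) x0))
        = (if k \<le> 2 then 0 else (?d - 2) * ?c (k-2) + ?T (k-2))"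
      using ckc[of "k-2"] by auto
    finally show ?thesis .
  qed
  have m1: "m \<ge> 1" using assms(7) by simp
  have sol: "?T m = (?d - 2) * US ?c m - VS (\<lambda>j. ?d * ?c j - ?s j) m"
    by (rule rec_solution[OF T12 rec m1])
  have lap: "laplace_ck E org ter bar j x0 = ?d * ?c j - ?s j" for j
    unfolding laplace_ck_def gdeg_def by simp
  have Nm: "int (Nm E org ter bar m x0) = ?c m - ?T m"
    using ck_split[of m x0] ckc[OF m1] unfolding Nm_def loops_eq Nc_def by simp
  show ?thesis
    unfolding ceil_eq Nm sol US_def VS_def lap[symmetric] gdeg_def by simp
qed


end
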